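(* Let $G$ be an $(n,d,\lambda)$-graph, $G'\subseteq G$ a subgraph, and $10\lambda\le\delta\le d$. Suppose $A,B\subseteq V(G)$ satisfy $|A|\le \delta n/(100d)$ and every $v\in A$ has $|N_{G'}(v)\cap B|\ge\delta$. Then $$|N_{G'}(A)\cap B|\ \ge\ \min\left(\frac{\delta^2|A|}{8\lambda^2},\ \frac{\delta n}{10d}\right)\ \ge\ 10|A|.$$
   Context: An $(n,d,\lambda)$-graph is an $n$-vertex $d$-regular graph whose second largest eigenvalue in absolute value is at most $\lambda$. For a vertex $v$, $N_{G'}(v)$ is its neighbourhood in $G'$; for a set $A$, $N_{G'}(A)=\left(\bigcup_{a\in A}N_{G'}(a)\right)\setminus A$ is the external neighbourhood. *)

theory Defs
  imports "Jordan_Normal_Form.Char_Poly"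
begin

definition simple_graph_on :: "nat \<Rightarrow> (nat \<Rightarrow> nat \<Rightarrow> bool) \<Rightarrow> bool" where
  "simple_graph_on n E \<longleftrightarrow>
     (\<forall>u v. E u v \<longrightarrow> u < n \<and> v < n) \<and> (\<forall>u v. E u v \<longrightarrow> E v u) \<and> (\<forall>v. \<not> E v v)"

definition nbhd :: "(nat \<Rightarrow> nat \<Rightarrow> bool) \<Rightarrow> nat \<Rightarrow> nat set" where
  "nbhd E v = {u. E v u}"

definition nbhd_set :: "(nat \<Rightarrow> nat \<Rightarrow> bool) \<Rightarrow> nat set \<Rightarrow> nat set" where
  "nbhd_set E A = (\<Union>a\<in>A. nbhd E a) - A"

definition adj_mat :: "nat \<Rightarrow> (nat \<Rightarrow> nat \<Rightarrow> bool) \<Rightarrow> real mat" where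
  "adj_mat n E = mat n n (\<lambda>(i, j). if E i j then 1 else 0)"

text \<open>(n,d,lambda)-graph: n-vertex d-regular simple graph such that, after removing one
  copy of the eigenvalue d from the spectrum (with multiplicity) of the adjacency matrix,
  all remaining eigenvalues have absolute value at most lambda.\<close>
definition ndl_graph :: "nat \<Rightarrow> nat \<Rightarrow> real \<Rightarrow> (nat \<Rightarrow> nat \<Rightarrow> bool) \<Rightarrow> bool" where
  "ndl_graph n d lam E \<longleftrightarrow>
     simple_graph_on n E \<and>
     (\<forall>v<n. card (nbhd E v) = d) \<and>
     (\<exists>q. char_poly (adj_mat n E) = [:- real d, 1:] * q \<and>
          (\<forall>z::complex. poly (map_poly complex_of_real q) z = 0 \<longrightarrow> cmod z \<le> lam))"

definition subgraph :: "(nat \<Rightarrow> nat \<Rightarrow> bool) \<Rightarrow> (nat \<Rightarrow> nat \<Rightarrow> bool) \<Rightarrow> bool" where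
  "subgraph E' E \<longleftrightarrow> (\<forall>u v. E' u v \<longrightarrow> E u v) \<and> (\<forall>u v. E' u v \<longrightarrow> E' v u)"

end

theory Submission
  imports Defs "Jordan_Normal_Form.Schur_Decomposition" "Jordan_Normal_Form.Spectral_Radius"
begin


lemma char_poly_col0:
  fixes A :: "'a :: comm_ring_1 mat"
  assumes A: "A \<in> carrier_mat n n" and n: "n \<noteq> 0"
    and c: "col A 0 = vec n (\<lambda>i. if i = 0 then e else 0)"
  shows "char_poly A = [:- e, 1:] * char_poly (mat (n-1) (n-1) (\<lambda>(i,j). A $$ (i+1, j+1)))"
proof -
  obtain A1 A2 A0 A3 where sp: "split_block A 1 1 = (A1,A2,A0,A3)"
    by (cases "split_block A 1 1", auto)
  from A n have dims: "dim_row A = 1 + (n-1)" "dim_col A = 1 + (n-1)" by auto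
  note sb = split_block[OF sp dims]
  have A3: "A3 = mat (n-1) (n-1) (\<lambda>(i,j). A $$ (i+1, j+1))"
    using sp A unfolding split_block_def Let_def by auto
  have A1: "A1 = mat 1 1 (\<lambda> _. e)"
    using sp arg_cong[OF c, of "\<lambda> v. v $ 0"] A n unfolding split_block_def Let_def
    by (auto simp: col_def)
  have A0: "A0 = 0\<^sub>m (n-1) 1"
  proof -
    { fix i assume "i < n - 1"
      with arg_cong[OF c, of "\<lambda> v. v $ Suc i"] A
      have "A $$ (Suc i, 0) = 0" by auto }
    thus ?thesis using sp A unfolding split_block_def Let_def by (auto intro!: eq_matI)
  qed
  have "char_poly A = char_poly A1 * char_poly A3"
    using sb(5) A0 char_poly_four_block_zeros_col[OF sb(1) sb(2) sb(4)] by simp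
  also have "char_poly A1 = [: -e,1 :]"
    by (simp add: A1 char_poly_defs det_def sign_def)
  finally show ?thesis unfolding A3 .
qed

lemma char_poly_shift:
  fixes M :: "real mat" and c d :: real
  assumes M: "M \<in> carrier_mat n n" and n: "n \<noteq> 0"
    and ev: "M *\<^sub>v vec n (\<lambda>_. 1) = d \<cdot>\<^sub>v vec n (\<lambda>_. 1)"
    and cp: "char_poly M = [:- d, 1:] * q"
  shows "char_poly (M - c \<cdot>\<^sub>m mat n n (\<lambda>_. 1)) = [:- (d - c * real n), 1:] * q"
proof -
  define one where "one = vec n (\<lambda>_. 1::real)"
  define J where "J = mat n n (\<lambda>_. 1::real)"
  define T where "T = M - c \<cdot>\<^sub>m J"
  define e where "e = d - c * real n"
  have one[simp]: "one \<in> carrier_vec n" unfolding one_def by auto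
  have J[simp]: "J \<in> carrier_mat n n" unfolding J_def by auto
  have T: "T \<in> carrier_mat n n" unfolding T_def using M J by (meson minus_carrier_mat smult_carrier_mat)
  have one0: "one \<noteq> 0\<^sub>v n" using n unfolding one_def
    by (metis dim_vec index_vec neq0_conv vec_eq_iff zero_neq_one index_zero_vec(1))
  have Jone: "J *\<^sub>v one = real n \<cdot>\<^sub>v one"
    unfolding J_def one_def by (rule eq_vecI, auto simp: scalar_prod_def)
  have evi: "\<And>i. i<n \<Longrightarrow> (\<Sum>j\<in>{0..<n}. M $$ (i,j)) = d"
  proof -
    fix i assume i: "i < n"
    from arg_cong[OF ev, of "\<lambda>v. v $ i"] i M show "(\<Sum>j\<in>{0..<n}. M $$ (i,j)) = d"
      by (auto simp: scalar_prod_def)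
  qed
  have evT: "T *\<^sub>v one = e \<cdot>\<^sub>v one"
    by (rule eq_vecI, insert M evi, auto simp: T_def J_def one_def e_def scalar_prod_def sum_subtractf)
  interpret cof_vec_space n "TYPE(real)" .
  define b where "b = basis_completion one"
  define ws where "ws = gram_schmidt n b"
  define W where "W = mat_of_cols n ws"
  define W' where "W' = corthogonal_inv W"
  from basis_completion[OF one one0, folded b_def]
  have span_b: "span (set b) = carrier_vec n" and dist_b: "distinct b" 
    and indep: "\<not> lin_dep (set b)" and b: "set b \<subseteq> carrier_vec n" and hdb: "hd b = one" 
    and len_b: "length b = n" by auto
  from hdb len_b n obtain vs where bv: "b = one # vs" by (cases b, auto)
  from gram_schmidt_result[OF b dist_b indep refl, folded ws_def]
  have ws: "set ws \<subseteq> carrier_vec n" "corthogonal ws" "length ws = n" 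
    by (auto simp: len_b)
  from gram_schmidt_hd[OF one, of vs, folded bv] have hdws: "hd ws = one" unfolding ws_def .
  have orth_W: "corthogonal_mat W" using orthogonal_mat_of_cols ws unfolding W_def.
  have W: "W \<in> carrier_mat n n"
    using ws unfolding W_def using mat_of_cols_carrier(1)[of n ws] by auto
  have W': "W' \<in> carrier_mat n n" unfolding W'_def corthogonal_inv_def using W 
    by (auto simp: mat_of_rows_def)  
  from corthogonal_inv_result[OF orth_W] 
  have W'W: "inverts_mat W' W" unfolding W'_def .
  hence WW': "inverts_mat W W'" using mat_mult_left_right_inverse[OF W' W] W' W
    unfolding inverts_mat_def by auto
  have simM: "similar_mat (W' * M * W) M"
    unfolding similar_mat_def
    by (intro exI[of _ W'] exI[of _ W] similar_mat_witI[of _ _ n], insert W W' M W'W WW', auto simp: inverts_mat_def)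
  have simT: "similar_mat (W' * T * W) T"
    unfolding similar_mat_def
    by (intro exI[of _ W'] exI[of _ W] similar_mat_witI[of _ _ n], insert W W' T W'W WW', auto simp: inverts_mat_def)
  have colM: "col (W' * M * W) 0 = vec n (\<lambda> i. if i = 0 then d else 0)"
    unfolding W'_def W_def
    using corthogonal_col_ev_0[OF M one one0 ev[folded one_def] n hdws ws] .
  have colT: "col (W' * T * W) 0 = vec n (\<lambda> i. if i = 0 then e else 0)"
    unfolding W'_def W_def
    using corthogonal_col_ev_0[OF T one one0 evT n hdws ws] .
  have colW0: "col W 0 = one"
  proof -
    have "ws ! 0 = one" using hdws ws(3) n by (cases ws, auto)
    thus ?thesis unfolding W_def using ws n by (subst col_mat_of_cols, auto)
  qed
  have W'W1: "W' * W = 1\<^sub>m n" using W'W unfolding inverts_mat_def using W' by auto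
  have W'one: "W' *\<^sub>v one = unit_vec n 0"
    using col_mult2[OF W' W, of 0] n W'W1 colW0 by auto
  have W'J: "W' * J = mat n n (\<lambda>(i,k). if i = 0 then 1 else 0)"
  proof (rule eq_matI)
    fix i j assume ij: "i < dim_row (mat n n (\<lambda>(i,k). if i = 0 then 1 else 0 :: real))"
      "j < dim_col (mat n n (\<lambda>(i,k). if i = 0 then 1 else 0 :: real))"
    have "col J j = one" using ij unfolding J_def one_def by (auto intro!: eq_vecI)
    have "(W' * J) $$ (i,j) = row W' i \<bullet> col J j" using ij W' J by (subst index_mult_mat, auto simp: J_def)
    hence "(W' * J) $$ (i,j) = (W' *\<^sub>v one) $ i" using ij W' \<open>col J j = one\<close> by auto
    thus "(W' * J) $$ (i,j) = mat n n (\<lambda>(i,k). if i = 0 then 1 else 0 :: real) $$ (i,j)"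
      unfolding W'one using ij by auto
  qed (insert W', auto simp: J_def)
  have WJW0: "(W' * J * W) $$ (i,j) = 0" if "0 < i" "i < n" "j < n" for i j
  proof -
    have "row (W' * J) i = 0\<^sub>v n" unfolding W'J using that by (auto intro!: eq_vecI)
    thus ?thesis using that W W' by auto
  qed
  have s1: "W' * (c \<cdot>\<^sub>m J) = c \<cdot>\<^sub>m (W' * J)" by (rule mult_smult_distrib[OF W' J])
  have s2: "(c \<cdot>\<^sub>m (W' * J)) * W = c \<cdot>\<^sub>m (W' * J * W)"
    by (rule mult_smult_assoc_mat[of _ n n _ n], insert W' J W, auto)
  have B': "W' * T * W = W' * M * W - c \<cdot>\<^sub>m (W' * J * W)"
    unfolding T_def using W W' M J s1 s2
    by (simp add: mult_minus_distrib_mat[of _ n n] minus_mult_distrib_mat[of _ n n]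
       mult_smult_distrib[of _ n n] mult_smult_assoc_mat[of _ n n])
  have blk: "mat (n-1) (n-1) (\<lambda>(i,j). (W' * T * W) $$ (i+1, j+1))
      = mat (n-1) (n-1) (\<lambda>(i,j). (W' * M * W) $$ (i+1, j+1))"
    by (rule eq_matI, insert W W' M J WJW0, auto simp: B')
  have WMW: "W' * M * W \<in> carrier_mat n n" using W W' M by auto
  have WTW: "W' * T * W \<in> carrier_mat n n" using W W' T by auto
  have "[:- d, 1:] * q = [:- d, 1:] * char_poly (mat (n-1) (n-1) (\<lambda>(i,j). (W' * M * W) $$ (i+1, j+1)))"
    unfolding cp[symmetric] char_poly_similar[OF simM, symmetric] by (rule char_poly_col0[OF WMW n colM])
  hence q: "q = char_poly (mat (n-1) (n-1) (\<lambda>(i,j). (W' * M * W) $$ (i+1, j+1)))"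
    by (metis mult_cancel_left pCons_eq_0_iff zero_neq_one)
  have "char_poly T = [:- e, 1:] * q"
    unfolding char_poly_similar[OF simT, symmetric] char_poly_col0[OF WTW n colT] blk q ..
  thus ?thesis unfolding T_def J_def e_def .
qed


lemma cs_sum:
  fixes a b :: "nat \<Rightarrow> real"
  shows "(\<Sum>i\<in>I. a i * b i)^2 \<le> (\<Sum>i\<in>I. (a i)^2) * (\<Sum>i\<in>I. (b i)^2)"
proof -
  have "0 \<le> (\<Sum>i\<in>I. \<Sum>j\<in>I. (a i * b j - a j * b i)^2)"
    by (intro sum_nonneg, auto)
  also have "\<dots> = (\<Sum>i\<in>I. \<Sum>j\<in>I. (a i)^2 * (b j)^2 + (a j)^2 * (b i)^2 - 2 * ((a i * b i) * (a j * b j)))"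
    by (intro sum.cong refl, simp add: power2_eq_square algebra_simps)
  also have "\<dots> = (\<Sum>i\<in>I. \<Sum>j\<in>I. (a i)^2 * (b j)^2) + (\<Sum>i\<in>I. \<Sum>j\<in>I. (a j)^2 * (b i)^2)
      - 2 * (\<Sum>i\<in>I. \<Sum>j\<in>I. (a i * b i) * (a j * b j))"
    by (simp only: sum_subtractf sum.distrib sum_distrib_left)
  also have "(\<Sum>i\<in>I. \<Sum>j\<in>I. (a i)^2 * (b j)^2) = (\<Sum>i\<in>I. (a i)^2) * (\<Sum>i\<in>I. (b i)^2)"
    by (simp add: sum_product)
  also have "(\<Sum>i\<in>I. \<Sum>j\<in>I. (a j)^2 * (b i)^2) = (\<Sum>i\<in>I. (a i)^2) * (\<Sum>i\<in>I. (b i)^2)"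
    by (subst sum.swap, simp add: sum_product)
  also have "(\<Sum>i\<in>I. \<Sum>j\<in>I. (a i * b i) * (a j * b j)) = (\<Sum>i\<in>I. a i * b i)^2"
    by (simp add: sum_product power2_eq_square)
  finally show ?thesis by simp
qed

lemma cs_vec:
  fixes x y :: "real vec"
  assumes "x \<in> carrier_vec n" "y \<in> carrier_vec n"
  shows "(x \<bullet> y)^2 \<le> (x \<bullet> x) * (y \<bullet> y)"
  using cs_sum[of "\<lambda>i. x $ i" "\<lambda>i. y $ i" "{0..<n}"] assms
  by (simp add: scalar_prod_def power2_eq_square)

lemma pow_comm: "A \<in> carrier_mat n n \<Longrightarrow> A * A ^\<^sub>m k = A ^\<^sub>m k * A"
proof (induct k)
  case (Suc k)
  have "A * A ^\<^sub>m Suc k = (A * A ^\<^sub>m k) * A" using Suc(2) by (simp add: assoc_mult_mat[of _ n n _ n _ n])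
  also have "\<dots> = A ^\<^sub>m Suc k * A" using Suc by simp
  finally show ?case .
qed auto

lemma pow_add_mat: "A \<in> carrier_mat n n \<Longrightarrow> A ^\<^sub>m (k + l) = A ^\<^sub>m k * A ^\<^sub>m l"
proof (induct l)
  case (Suc l)
  thus ?case by (simp add: assoc_mult_mat[of _ n n _ n _ n])
qed auto

lemma pow_sym: fixes A :: "'a :: comm_ring_1 mat"
  assumes A: "A \<in> carrier_mat n n" and s: "transpose_mat A = A"
  shows "transpose_mat (A ^\<^sub>m k) = A ^\<^sub>m k"
proof (induct k)
  case (Suc k)
  have "transpose_mat (A ^\<^sub>m Suc k) = transpose_mat A * transpose_mat (A ^\<^sub>m k)"
    using transpose_mult[OF pow_carrier_mat[OF A, of k] A] by simp
  also have "\<dots> = A ^\<^sub>m Suc k" using Suc s pow_comm[OF A] by simp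
  finally show ?case .
qed (insert A, auto)

lemma sym_sq: fixes B :: "real mat"
  assumes B: "B \<in> carrier_mat n n" and s: "transpose_mat B = B" and x: "x \<in> carrier_vec n"
  shows "(B *\<^sub>v x) \<bullet> (B *\<^sub>v x) = x \<bullet> ((B * B) *\<^sub>v x)"
  using transpose_vec_mult_scalar[OF B, of "B *\<^sub>v x" x] B x s by auto

lemma power_step:
  fixes A :: "real mat"
  assumes A: "A \<in> carrier_mat n n" and s: "transpose_mat A = A" and x: "x \<in> carrier_vec n"
  shows "((A *\<^sub>v x) \<bullet> (A *\<^sub>v x))^(2^k) \<le>
     ((A ^\<^sub>m (2^k) *\<^sub>v x) \<bullet> (A ^\<^sub>m (2^k) *\<^sub>v x)) * (x \<bullet> x)^(2^k - 1)"
proof (induct k)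
  case 0
  have "A ^\<^sub>m 1 = A" using A by simp
  thus ?case by simp
next
  case (Suc k)
  define m where "m = (2::nat)^k"
  have m1: "m \<ge> 1" unfolding m_def by simp
  define B where "B = A ^\<^sub>m m"
  have B: "B \<in> carrier_mat n n" unfolding B_def using A by simp
  have sB: "transpose_mat B = B" unfolding B_def using pow_sym[OF A s] .
  have BB: "B * B = A ^\<^sub>m (2*m)" unfolding B_def using pow_add_mat[OF A, of m m] by (simp add: mult_2)
  have xx: "x \<bullet> x \<ge> 0" using x by (simp add: scalar_prod_def sum_nonneg)
  let ?L = "(A *\<^sub>v x) \<bullet> (A *\<^sub>v x)"
  have L0: "?L \<ge> 0" using A x by (simp add: scalar_prod_def sum_nonneg)
  have Bx0: "(B *\<^sub>v x) \<bullet> (B *\<^sub>v x) \<ge> 0" using B x by (simp add: scalar_prod_def sum_nonneg)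
  have "?L^(2^Suc k) = (?L^m)^2" unfolding m_def by (simp add: power_mult[symmetric] mult.commute)
  also have "\<dots> \<le> (((B *\<^sub>v x) \<bullet> (B *\<^sub>v x)) * (x \<bullet> x)^(m - 1))^2"
    using Suc L0 unfolding m_def B_def by (intro power_mono, auto)
  also have "\<dots> = ((B *\<^sub>v x) \<bullet> (B *\<^sub>v x))^2 * (x \<bullet> x)^(2*m - 2)"
  proof -
    have e: "2*m-2 = (m-1)*2" by simp
    show ?thesis unfolding e power_mult_distrib power_mult by simp
  qed
  finally have c1: "?L^(2^Suc k) \<le> ((B *\<^sub>v x) \<bullet> (B *\<^sub>v x))^2 * (x \<bullet> x)^(2*m - 2)" .
  have "((B *\<^sub>v x) \<bullet> (B *\<^sub>v x))^2 = (x \<bullet> (A ^\<^sub>m (2*m) *\<^sub>v x))^2"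
    using sym_sq[OF B sB x] BB by simp
  also have "\<dots> \<le> (x \<bullet> x) * ((A ^\<^sub>m (2*m) *\<^sub>v x) \<bullet> (A ^\<^sub>m (2*m) *\<^sub>v x))"
    using cs_vec[of x n "A ^\<^sub>m (2*m) *\<^sub>v x"] x A by (meson mult_mat_vec_carrier pow_carrier_mat)
  finally have c2: "((B *\<^sub>v x) \<bullet> (B *\<^sub>v x))^2 \<le> (x \<bullet> x) * ((A ^\<^sub>m (2*m) *\<^sub>v x) \<bullet> (A ^\<^sub>m (2*m) *\<^sub>v x))" .
  have "?L^(2^Suc k) \<le> (x \<bullet> x) * ((A ^\<^sub>m (2*m) *\<^sub>v x) \<bullet> (A ^\<^sub>m (2*m) *\<^sub>v x)) * (x \<bullet> x)^(2*m - 2)"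
    using c1 mult_right_mono[OF c2, of "(x \<bullet> x)^(2*m - 2)"] xx by simp
  also have "\<dots> = ((A ^\<^sub>m (2*m) *\<^sub>v x) \<bullet> (A ^\<^sub>m (2*m) *\<^sub>v x)) * (x \<bullet> x)^(2*m - 1)"
  proof -
    have "2*m - 1 = Suc (2*m - 2)" using m1 by simp
    thus ?thesis by simp
  qed
  finally show ?case unfolding m_def by simp
qed

lemma entry_bound:
  fixes A :: "real mat"
  assumes A: "A \<in> carrier_mat n n" and b: "\<And>i j. i < n \<Longrightarrow> j < n \<Longrightarrow> \<bar>A $$ (i,j)\<bar> \<le> c"
    and x: "x \<in> carrier_vec n"
  shows "(A *\<^sub>v x) \<bullet> (A *\<^sub>v x) \<le> real n * real n * c^2 * (x \<bullet> x)"
proof -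
  have xx: "x \<bullet> x = (\<Sum>j\<in>{0..<n}. (x $ j)^2)" using x by (simp add: scalar_prod_def power2_eq_square)
  have ei: "((A *\<^sub>v x) $ i)^2 \<le> real n * c^2 * (x \<bullet> x)" if i: "i < n" for i
  proof -
    have "(A *\<^sub>v x) $ i = (\<Sum>j\<in>{0..<n}. A $$ (i,j) * x $ j)"
      using A x i by (simp add: scalar_prod_def)
    hence s1: "((A *\<^sub>v x) $ i)^2 \<le> (\<Sum>j\<in>{0..<n}. (A $$ (i,j))^2) * (\<Sum>j\<in>{0..<n}. (x $ j)^2)"
      using cs_sum[of "\<lambda>j. A $$ (i,j)" "\<lambda>j. x $ j" "{0..<n}"] by simp
    have "(\<Sum>j\<in>{0..<n}. (A $$ (i,j))^2) \<le> (\<Sum>j\<in>{0..<n}. c^2)"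
    proof (rule sum_mono)
      fix j assume "j \<in> {0..<n}"
      hence "\<bar>A $$ (i,j)\<bar>^2 \<le> c^2" using b[OF i] by (intro power_mono, auto)
      thus "(A $$ (i,j))^2 \<le> c^2" by simp
    qed
    hence s2: "(\<Sum>j\<in>{0..<n}. (A $$ (i,j))^2) \<le> real n * c^2" by simp
    have "(\<Sum>j\<in>{0..<n}. (A $$ (i,j))^2) * (\<Sum>j\<in>{0..<n}. (x $ j)^2) \<le> real n * c^2 * (\<Sum>j\<in>{0..<n}. (x $ j)^2)"
      by (rule mult_right_mono[OF s2], simp add: sum_nonneg)
    with s1 show ?thesis unfolding xx by linarith
  qed
  have "(A *\<^sub>v x) \<bullet> (A *\<^sub>v x) = (\<Sum>i\<in>{0..<n}. ((A *\<^sub>v x) $ i)^2)"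
    using A by (simp add: scalar_prod_def power2_eq_square)
  also have "\<dots> \<le> (\<Sum>i\<in>{0..<n}. real n * c^2 * (x \<bullet> x))" by (rule sum_mono, insert ei, auto)
  finally show ?thesis by simp
qed

lemma sym_spec_bound:
  fixes T :: "real mat" and r :: real
  assumes T: "T \<in> carrier_mat n n" and n: "n \<noteq> 0" and sym: "transpose_mat T = T" and r: "r > 0"
    and roots: "\<And>\<mu>. poly (map_poly complex_of_real (char_poly T)) \<mu> = 0 \<Longrightarrow> cmod \<mu> < r"
    and x: "x \<in> carrier_vec n"
  shows "(T *\<^sub>v x) \<bullet> (T *\<^sub>v x) \<le> r^2 * (x \<bullet> x)"
proof -
  define Tr where "Tr = (1/r) \<cdot>\<^sub>m T"
  have Tr: "Tr \<in> carrier_mat n n" unfolding Tr_def using T by simp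
  have symT: "T $$ (j,i) = T $$ (i,j)" if "i < n" "j < n" for i j
  proof -
    have "transpose_mat T $$ (i,j) = T $$ (j,i)" using T that by simp
    thus ?thesis using sym by simp
  qed
  have symr: "transpose_mat Tr = Tr"
    by (rule eq_matI, insert T symT, auto simp: Tr_def)
  define Tc where "Tc = map_mat complex_of_real Tr"
  have Tc: "Tc \<in> carrier_mat n n" unfolding Tc_def using Tr by simp
  define T0 where "T0 = map_mat complex_of_real T"
  have T0: "T0 \<in> carrier_mat n n" unfolding T0_def using T by simp
  have sr: "spectral_radius Tc < 1"
  proof -
    from spectral_radius_mem_max(1)[OF Tc] n obtain \<mu> where mu: "\<mu> \<in> spectrum Tc"
      and eq: "spectral_radius Tc = cmod \<mu>" by auto
    from mu obtain v where ev: "eigenvector Tc v \<mu>" unfolding spectrum_def eigenvalue_def by auto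
    hence v: "v \<in> carrier_vec n" "v \<noteq> 0\<^sub>v n" and Tcv: "Tc *\<^sub>v v = \<mu> \<cdot>\<^sub>v v"
      unfolding eigenvector_def using Tc by auto
    have "T0 *\<^sub>v v = (complex_of_real r * \<mu>) \<cdot>\<^sub>v v"
    proof (rule eq_vecI)
      fix i assume "i < dim_vec ((complex_of_real r * \<mu>) \<cdot>\<^sub>v v)"
      hence i: "i < n" using v by auto
      have "(Tc *\<^sub>v v) $ i = \<mu> * v $ i" using Tcv i v by simp
      moreover have "complex_of_real r * (Tc *\<^sub>v v) $ i = (T0 *\<^sub>v v) $ i"
      proof -
        have r0: "complex_of_real r \<noteq> 0" using r by simp
        show ?thesis using i v T r0 unfolding Tc_def Tr_def T0_def
          by (simp add: scalar_prod_def sum_distrib_left)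
      qed
      ultimately have "(T0 *\<^sub>v v) $ i = complex_of_real r * (\<mu> * v $ i)" by simp
      thus "(T0 *\<^sub>v v) $ i = ((complex_of_real r * \<mu>) \<cdot>\<^sub>v v) $ i" using i v by simp
    qed (insert v T0, auto)
    hence "eigenvalue T0 (complex_of_real r * \<mu>)" unfolding eigenvalue_def eigenvector_def
      using v T0 by auto
    hence "poly (char_poly T0) (complex_of_real r * \<mu>) = 0"
      using eigenvalue_root_char_poly[OF T0] by simp
    moreover have "char_poly T0 = map_poly complex_of_real (char_poly T)"
      unfolding T0_def by (rule of_real_hom.char_poly_hom[OF T])
    ultimately have "cmod (complex_of_real r * \<mu>) < r" using roots by simp
    hence "r * cmod \<mu> < r * 1" using r by (simp add: norm_mult)
    thus ?thesis unfolding eq using r by simp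
  qed
  from spectral_radius_jnf_norm_bound_less_1_upper_triangular[OF Tc sr]
  obtain c where c: "\<And>k. norm_bound (Tc ^\<^sub>m k) c" by auto
  have cb: "\<bar>(Tr ^\<^sub>m k) $$ (i,j)\<bar> \<le> c" if "i < n" "j < n" for i j k
  proof -
    have "Tc ^\<^sub>m k = map_mat complex_of_real (Tr ^\<^sub>m k)"
      unfolding Tc_def by (rule of_real_hom.mat_hom_pow[OF Tr, symmetric])
    hence e: "(Tc ^\<^sub>m k) $$ (i,j) = complex_of_real ((Tr ^\<^sub>m k) $$ (i,j))"
      using Tr that by simp
    have "norm ((Tc ^\<^sub>m k) $$ (i,j)) \<le> c"
      using c[of k] that Tc unfolding norm_bound_def by simp
    thus ?thesis unfolding e by simp
  qed
  define K where "K = real n * real n * c^2"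
  have main: "((Tr *\<^sub>v x) \<bullet> (Tr *\<^sub>v x))^(2^k) \<le> K * (x \<bullet> x)^(2^k)" for k
  proof -
    have "((Tr *\<^sub>v x) \<bullet> (Tr *\<^sub>v x))^(2^k) \<le>
     ((Tr ^\<^sub>m (2^k) *\<^sub>v x) \<bullet> (Tr ^\<^sub>m (2^k) *\<^sub>v x)) * (x \<bullet> x)^(2^k - 1)"
      by (rule power_step[OF Tr symr x])
    also have "\<dots> \<le> (K * (x \<bullet> x)) * (x \<bullet> x)^(2^k - 1)"
      unfolding K_def
      by (rule mult_right_mono[OF entry_bound[OF pow_carrier_mat[OF Tr] cb x]],
          insert x, auto simp: scalar_prod_def sum_nonneg)
    also have "\<dots> = K * (x \<bullet> x)^(2^k)"
    proof -
      have "(2::nat)^k = Suc (2^k - 1)" by simp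
      hence "(x \<bullet> x)^(2^k) = (x \<bullet> x) * (x \<bullet> x)^(2^k - 1)" by (metis power_Suc)
      thus ?thesis by simp
    qed
    finally show ?thesis .
  qed
  have xx: "x \<bullet> x \<ge> 0" using x by (simp add: scalar_prod_def sum_nonneg)
  have yy: "(Tr *\<^sub>v x) \<bullet> (Tr *\<^sub>v x) \<ge> 0" by (simp add: scalar_prod_def sum_nonneg)
  have le: "(Tr *\<^sub>v x) \<bullet> (Tr *\<^sub>v x) \<le> x \<bullet> x"
  proof (cases "x \<bullet> x = 0")
    case True
    with main[of 0] show ?thesis by simp
  next
    case False
    hence xp: "x \<bullet> x > 0" using xx by simp
    define \<rho> where "\<rho> = ((Tr *\<^sub>v x) \<bullet> (Tr *\<^sub>v x)) / (x \<bullet> x)"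
    have rk: "\<rho>^(2^k) \<le> K" for k
    proof -
      have "\<rho>^(2^k) * (x \<bullet> x)^(2^k) = ((Tr *\<^sub>v x) \<bullet> (Tr *\<^sub>v x))^(2^k)"
        unfolding \<rho>_def using xp by (simp add: power_divide)
      also have "\<dots> \<le> K * (x \<bullet> x)^(2^k)" by (rule main)
      finally show ?thesis using xp by simp
    qed
    have "\<rho> \<le> 1"
    proof (rule ccontr)
      assume "\<not> \<rho> \<le> 1"
      hence g: "\<rho> - 1 > 0" by simp
      obtain k :: nat where k: "K / (\<rho> - 1) < real k" using reals_Archimedean2 by blast
      have "real k \<le> real (2^k)" by (simp add: less_imp_le[OF less_exp] del: of_nat_power)
      hence k2: "real k * (\<rho> - 1) \<le> real (2^k) * (\<rho> - 1)" using g by (intro mult_right_mono, auto)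
      have "K < real k * (\<rho> - 1)" using k g by (simp add: divide_less_eq)
      hence "K < real (2^k) * (\<rho> - 1)" using k2 by linarith
      also have "\<dots> < 1 + real (2^k) * (\<rho> - 1)" by simp
      also have "\<dots> \<le> (1 + (\<rho> - 1))^(2^k)" by (rule Bernoulli_inequality, insert g, simp)
      also have "\<dots> \<le> K" using rk[of k] by simp
      finally show False by simp
    qed
    thus ?thesis unfolding \<rho>_def using xp by (simp add: divide_le_eq)
  qed
  have Txe: "T *\<^sub>v x = r \<cdot>\<^sub>v (Tr *\<^sub>v x)"
  proof (rule eq_vecI)
    fix i assume "i < dim_vec (r \<cdot>\<^sub>v (Tr *\<^sub>v x))"
    hence i: "i < n" using Tr by simp
    show "(T *\<^sub>v x) $ i = (r \<cdot>\<^sub>v (Tr *\<^sub>v x)) $ i"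
      using i T x r Tr unfolding Tr_def by (simp add: scalar_prod_def sum_distrib_left)
  qed (insert T Tr, auto)
  have Tx: "(T *\<^sub>v x) \<bullet> (T *\<^sub>v x) = r^2 * ((Tr *\<^sub>v x) \<bullet> (Tr *\<^sub>v x))"
    unfolding Txe by (simp add: power2_eq_square)
  have "r^2 * ((Tr *\<^sub>v x) \<bullet> (Tr *\<^sub>v x)) \<le> r^2 * (x \<bullet> x)"
    by (rule mult_left_mono[OF le], simp)
  thus ?thesis unfolding Tx .
qed


lemma sum_ind_card:
  assumes "finite Z"
  shows "(\<Sum>j\<in>Z. if P j then (1::real) else 0) = real (card {j\<in>Z. P j})"
  using assms by (simp add: sum.inter_filter[symmetric])

lemma ind_bilin:
  fixes X :: "real mat"
  assumes X: "X \<in> carrier_mat n n" and A: "A \<subseteq> {0..<n}" and Z: "Z \<subseteq> {0..<n}"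
  shows "vec n (\<lambda>i. if i \<in> A then 1 else 0) \<bullet> (X *\<^sub>v vec n (\<lambda>j. if j \<in> Z then 1 else 0))
     = (\<Sum>i\<in>A. \<Sum>j\<in>Z. X $$ (i,j))"
proof -
  have inner: "row X i \<bullet> vec n (\<lambda>j. if j \<in> Z then 1 else 0) = (\<Sum>j\<in>Z. X $$ (i,j))" if i: "i < n" for i
  proof -
    have "row X i \<bullet> vec n (\<lambda>j. if j \<in> Z then 1 else 0) = (\<Sum>j\<in>{0..<n}. if j \<in> Z then X $$ (i,j) else 0)"
      using X i by (simp add: scalar_prod_def if_distrib cong: if_cong)
    also have "\<dots> = (\<Sum>j\<in>{0..<n} \<inter> Z. X $$ (i,j))" by (simp add: sum.inter_restrict)
    also have "{0..<n} \<inter> Z = Z" using Z by auto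
    finally show ?thesis .
  qed
  have "vec n (\<lambda>i. if i \<in> A then 1 else 0) \<bullet> (X *\<^sub>v vec n (\<lambda>j. if j \<in> Z then 1 else 0))
      = (\<Sum>i\<in>{0..<n}. if i \<in> A then (\<Sum>j\<in>Z. X $$ (i,j)) else 0)"
    using X inner by (auto simp: scalar_prod_def intro!: sum.cong)
  also have "\<dots> = (\<Sum>i\<in>{0..<n} \<inter> A. \<Sum>j\<in>Z. X $$ (i,j))" by (simp add: sum.inter_restrict)
  also have "{0..<n} \<inter> A = A" using A by auto
  finally show ?thesis .
qed

lemma ind_sq:
  assumes A: "A \<subseteq> {0..<n}"
  shows "vec n (\<lambda>i. if i \<in> A then 1 else 0) \<bullet> vec n (\<lambda>i. if i \<in> A then 1 else (0::real)) = real (card A)"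
proof -
  have "vec n (\<lambda>i. if i \<in> A then 1 else 0) \<bullet> vec n (\<lambda>i. if i \<in> A then 1 else (0::real))
     = (\<Sum>i\<in>{0..<n}. if i \<in> A then 1 else 0)" by (auto simp: scalar_prod_def intro!: sum.cong)
  also have "\<dots> = real (card {i\<in>{0..<n}. i \<in> A})" by (rule sum_ind_card, simp)
  also have "{i\<in>{0..<n}. i \<in> A} = A" using A by auto
  finally show ?thesis .
qed

lemma spec_bound_lam:
  fixes T :: "real mat" and lam :: real
  assumes T: "T \<in> carrier_mat n n" and n: "n \<noteq> 0" and sym: "transpose_mat T = T" and lam: "lam \<ge> 0"
    and roots: "\<And>\<mu>. poly (map_poly complex_of_real (char_poly T)) \<mu> = 0 \<Longrightarrow> cmod \<mu> \<le> lam"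
    and x: "x \<in> carrier_vec n"
  shows "(T *\<^sub>v x) \<bullet> (T *\<^sub>v x) \<le> lam^2 * (x \<bullet> x)"
proof -
  define s where "s = sqrt (x \<bullet> x)"
  define t where "t = sqrt ((T *\<^sub>v x) \<bullet> (T *\<^sub>v x))"
  have xx: "x \<bullet> x \<ge> 0" using x by (simp add: scalar_prod_def sum_nonneg)
  have yy: "(T *\<^sub>v x) \<bullet> (T *\<^sub>v x) \<ge> 0" by (simp add: scalar_prod_def sum_nonneg)
  have s0: "s \<ge> 0" and t0: "t \<ge> 0" unfolding s_def t_def using xx yy by auto
  have ss: "s^2 = x \<bullet> x" unfolding s_def using xx by simp
  have tt: "t^2 = (T *\<^sub>v x) \<bullet> (T *\<^sub>v x)" unfolding t_def using yy by simp
  have eps: "t \<le> (lam + \<epsilon>) * s" if e: "\<epsilon> > 0" for \<epsilon>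
  proof -
    have "(T *\<^sub>v x) \<bullet> (T *\<^sub>v x) \<le> (lam + \<epsilon>)^2 * (x \<bullet> x)"
    proof (rule sym_spec_bound[OF T n sym _ _ x])
      show "lam + \<epsilon> > 0" using lam e by simp
      fix \<mu> assume "poly (map_poly complex_of_real (char_poly T)) \<mu> = 0"
      from roots[OF this] show "cmod \<mu> < lam + \<epsilon>" using e by simp
    qed
    hence "t^2 \<le> ((lam + \<epsilon>) * s)^2" unfolding tt power_mult_distrib ss .
    moreover have "(lam + \<epsilon>) * s \<ge> 0" using s0 lam e by simp
    ultimately show ?thesis by (rule power2_le_imp_le)
  qed
  have "t \<le> lam * s"
  proof (rule field_le_epsilon)
    fix e :: real assume e: "e > 0"
    define \<epsilon> where "\<epsilon> = e / (s + 1)"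
    have s1: "s + 1 > 0" using s0 by simp
    have ep: "\<epsilon> > 0" unfolding \<epsilon>_def using e s1 by simp
    have "e * s \<le> e * (s + 1)" using e by (intro mult_left_mono, auto)
    hence "e * s / (s + 1) \<le> e" using s1 by (simp add: divide_le_eq)
    moreover have "\<epsilon> * s = e * s / (s + 1)" unfolding \<epsilon>_def by simp
    ultimately have es: "\<epsilon> * s \<le> e" by simp
    have "(lam + \<epsilon>) * s = lam * s + \<epsilon> * s" by (rule distrib_right)
    thus "t \<le> lam * s + e" using eps[OF ep] es by linarith
  qed
  hence "t^2 \<le> (lam * s)^2" using t0 by (intro power_mono, auto)
  thus ?thesis unfolding tt power_mult_distrib ss .
qed

theorem lemma3p9:
  fixes n d :: nat and lam \<delta> :: real and E E' :: "nat \<Rightarrow> nat \<Rightarrow> bool" and A B :: "nat set"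
  assumes "ndl_graph n d lam E"
    and "subgraph E' E"
    and "10 * lam \<le> \<delta>" and "\<delta> \<le> real d"
    and "A \<subseteq> {0..<n}" and "B \<subseteq> {0..<n}"
    and "real (card A) \<le> \<delta> * real n / (100 * real d)"
    and "\<forall>v\<in>A. real (card (nbhd E' v \<inter> B)) \<ge> \<delta>"
  shows "real (card (nbhd_set E' A \<inter> B))
           \<ge> min (\<delta>^2 * real (card A) / (8 * lam^2)) (\<delta> * real n / (10 * real d))
    \<and> min (\<delta>^2 * real (card A) / (8 * lam^2)) (\<delta> * real n / (10 * real d)) \<ge> 10 * real (card A)"
proof -
  from assms(1) have sg: "simple_graph_on n E" and reg: "\<forall>v<n. card (nbhd E v) = d"
    and "\<exists>q. char_poly (adj_mat n E) = [:- real d, 1:] * q \<and>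
          (\<forall>z::complex. poly (map_poly complex_of_real q) z = 0 \<longrightarrow> cmod z \<le> lam)"
    unfolding ndl_graph_def by auto
  then obtain q where cp: "char_poly (adj_mat n E) = [:- real d, 1:] * q"
    and qr: "\<And>z. poly (map_poly complex_of_real q) z = 0 \<Longrightarrow> cmod z \<le> lam" by auto
  have Ein: "\<And>u v. E u v \<Longrightarrow> u < n \<and> v < n" and Esym: "\<And>u v. E u v \<Longrightarrow> E v u"
    and Eirr: "\<And>v. \<not> E v v" using sg unfolding simple_graph_on_def by auto
  define M where "M = adj_mat n E"
  have M: "M \<in> carrier_mat n n" by (simp add: M_def adj_mat_def)
  have nbsub: "nbhd E v \<subseteq> {0..<n}" for v using Ein by (auto simp: nbhd_def)
  have finA: "finite A" using assms(5) finite_subset by blast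
  have cpM: "char_poly M = [:- real d, 1:] * q" using cp unfolding M_def .
  have q0: "q \<noteq> 0"
  proof
    assume "q = 0"
    hence "char_poly M = 0" using cpM by simp
    with degree_monic_char_poly[OF M] show False by simp
  qed
  have degn: "n = Suc (degree q)"
  proof -
    have "n = degree (char_poly M)" using degree_monic_char_poly[OF M] by simp
    also have "\<dots> = degree [:- real d, 1:] + degree q" unfolding cpM
      by (rule degree_mult_eq, insert q0, auto)
    finally show ?thesis by simp
  qed
  hence n0: "n \<noteq> 0" by simp
  show ?thesis
  proof (cases "d = 0")
    case True
    hence "real (card A) \<le> 0" using assms(7) by simp
    hence "A = {}" using finA by simp
    thus ?thesis using True by simp
  next
    case False
    hence dpos: "d > 0" by simp
    have nbE0: "nbhd E 0 \<subseteq> {0..<n} - {0}" using Ein Eirr by (auto simp: nbhd_def)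
    have cd0: "card (nbhd E 0) = d" using reg n0 by simp
    have dlt: "d < n"
    proof -
      have "d \<le> card ({0..<n} - {0::nat})" using card_mono[OF _ nbE0] cd0 by simp
      thus ?thesis using n0 by simp
    qed
    have n2: "n \<ge> 2" using dlt dpos by simp
    have lam0: "lam \<ge> 0"
    proof -
      have "degree (map_poly complex_of_real q) = degree q" by simp
      hence "degree (map_poly complex_of_real q) \<noteq> 0" using degn n2 by simp
      hence "\<not> constant (poly (map_poly complex_of_real q))" by (simp add: constant_degree)
      from fundamental_theorem_of_algebra[OF this] obtain z where "poly (map_poly complex_of_real q) z = 0" by auto
      from qr[OF this] show ?thesis using norm_ge_zero[of z] by linarith
    qed
    define one where "one = vec n (\<lambda>_. 1::real)"
    have Mone: "M *\<^sub>v vec n (\<lambda>_. 1) = real d \<cdot>\<^sub>v vec n (\<lambda>_. 1)"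
    proof (rule eq_vecI)
      fix i assume "i < dim_vec (real d \<cdot>\<^sub>v vec n (\<lambda>_. 1::real))"
      hence i: "i < n" by simp
      have "(M *\<^sub>v vec n (\<lambda>_. 1)) $ i = (\<Sum>j\<in>{0..<n}. if E i j then 1 else 0)"
        using i M by (simp add: scalar_prod_def M_def adj_mat_def)
      also have "\<dots> = real (card {j\<in>{0..<n}. E i j})" by (rule sum_ind_card, simp)
      also have "{j\<in>{0..<n}. E i j} = nbhd E i" using Ein by (auto simp: nbhd_def)
      also have "card (nbhd E i) = d" using reg i by simp
      finally show "(M *\<^sub>v vec n (\<lambda>_. 1)) $ i = (real d \<cdot>\<^sub>v vec n (\<lambda>_. 1)) $ i" using i by simp
    qed (insert M, auto)
    define J where "J = mat n n (\<lambda>_. 1::real)"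
    define T where "T = M - (real d / real n) \<cdot>\<^sub>m J"
    have T: "T \<in> carrier_mat n n" unfolding T_def J_def using M by (meson minus_carrier_mat smult_carrier_mat mat_carrier)
    have Tij: "T $$ (i,j) = (if E i j then 1 else 0) - real d / real n" if "i < n" "j < n" for i j
      using that M unfolding T_def J_def M_def adj_mat_def by simp
    have cpT: "char_poly T = [:- (real d - real d / real n * real n), 1:] * q"
      unfolding T_def J_def by (rule char_poly_shift[OF M n0 Mone cpM])
    hence cpT': "char_poly T = pCons 0 q" using n0 by simp
    have Eiff: "E i j = E j i" for i j using Esym by blast
    have symT: "transpose_mat T = T"
    proof (rule eq_matI)
      fix i j assume "i < dim_row T" "j < dim_col T"
      hence ij: "i < n" "j < n" using T by auto
      have "transpose_mat T $$ (i,j) = T $$ (j,i)" using ij T by simp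
      also have "\<dots> = T $$ (i,j)" using Tij[of i j] Tij[of j i] ij Eiff[of i j] by simp
      finally show "transpose_mat T $$ (i,j) = T $$ (i,j)" .
    qed (insert T, auto)
    have roots: "cmod \<mu> \<le> lam" if "poly (map_poly complex_of_real (char_poly T)) \<mu> = 0" for \<mu>
    proof -
      from that have "\<mu> * poly (map_poly complex_of_real q) \<mu> = 0"
        unfolding cpT' of_real_hom.map_poly_pCons_hom by simp
      thus ?thesis using qr lam0 by auto
    qed
    have bound: "(T *\<^sub>v x) \<bullet> (T *\<^sub>v x) \<le> lam^2 * (x \<bullet> x)" if "x \<in> carrier_vec n" for x
      by (rule spec_bound_lam[OF T n0 symT lam0 roots that])
    have lampos: "lam > 0"
    proof -
      from cd0 dpos have "nbhd E 0 \<noteq> {}" by auto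
      then obtain u where "u \<in> nbhd E 0" by auto
      hence E0u: "E 0 u" by (simp add: nbhd_def)
      hence Eu: "E u 0" by (rule Esym)
      have u: "u < n" using Ein[OF E0u] by simp
      define x :: "real vec" where "x = unit_vec n 0"
      have x: "x \<in> carrier_vec n" unfolding x_def by simp
      have xx: "x \<bullet> x = 1" unfolding x_def using n0 by simp
      have "(T *\<^sub>v x) $ u = T $$ (u,0)" unfolding x_def using T u n0 by simp
      also have "\<dots> = 1 - real d / real n" using Tij[OF u] n0 Eu by simp
      finally have Tu: "(T *\<^sub>v x) $ u = 1 - real d / real n" .
      have "real d / real n < 1" using dlt by simp
      hence pos: "((T *\<^sub>v x) $ u)^2 > 0" unfolding Tu using dlt by simp
      have "((T *\<^sub>v x) $ u)^2 \<le> (\<Sum>i\<in>{0..<n}. ((T *\<^sub>v x) $ i)^2)"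
        by (rule member_le_sum, insert u, auto)
      also have "\<dots> = (T *\<^sub>v x) \<bullet> (T *\<^sub>v x)" using T by (simp add: scalar_prod_def power2_eq_square)
      also have "\<dots> \<le> lam^2" using bound[OF x] xx by simp
      finally have "lam^2 > 0" using pos by linarith
      thus ?thesis using lam0 by (cases "lam = 0", auto)
    qed
    have \<delta>pos: "\<delta> > 0" using assms(3) lampos by simp
    show ?thesis
    proof (cases "A = {}")
      case True
      thus ?thesis using \<delta>pos dpos n0 by simp
    next
      case False
      define \<alpha> where "\<alpha> = real (card A)"
      have \<alpha>pos: "\<alpha> > 0" unfolding \<alpha>_def using False finA by (simp add: card_gt_0_iff)
      define Y where "Y = nbhd_set E' A \<inter> B"
      define Z where "Z = Y \<union> A"
      have Ysub: "Y \<subseteq> {0..<n}" unfolding Y_def using assms(6) by auto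
      have Zsub: "Z \<subseteq> {0..<n}" unfolding Z_def using Ysub assms(5) by auto
      have finY: "finite Y" using Ysub finite_subset by blast
      have finZ: "finite Z" using Zsub finite_subset by blast
      define y where "y = real (card Y)"
      define \<zeta> where "\<zeta> = real (card Z)"
      have \<zeta>y: "\<zeta> \<le> y + \<alpha>" unfolding \<zeta>_def y_def \<alpha>_def Z_def
        using card_Un_le[of Y A] by linarith
      define e where "e = (\<Sum>i\<in>A. real (card (nbhd E i \<inter> Z)))"
      have e_ge: "e \<ge> \<delta> * \<alpha>"
      proof -
        have "\<delta> \<le> real (card (nbhd E i \<inter> Z))" if i: "i \<in> A" for i
        proof -
          have "nbhd E' i \<inter> B \<subseteq> nbhd E i \<inter> Z"
          proof
            fix j assume j: "j \<in> nbhd E' i \<inter> B"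
            hence "E' i j" by (simp add: nbhd_def)
            hence "E i j" using assms(2) unfolding subgraph_def by auto
            moreover have "j \<in> Z"
            proof (cases "j \<in> A")
              case True thus ?thesis unfolding Z_def by auto
            next
              case False
              thus ?thesis using j i unfolding Z_def Y_def nbhd_set_def by auto
            qed
            ultimately show "j \<in> nbhd E i \<inter> Z" by (simp add: nbhd_def)
          qed
          hence "card (nbhd E' i \<inter> B) \<le> card (nbhd E i \<inter> Z)"
            by (intro card_mono, insert finZ, auto)
          thus ?thesis using assms(8) i by (meson of_nat_le_iff order_trans)
        qed
        hence "(\<Sum>i\<in>A. \<delta>) \<le> e" unfolding e_def by (intro sum_mono, auto)
        thus ?thesis unfolding \<alpha>_def by (simp add: mult.commute)
      qed
      define a where "a = vec n (\<lambda>i. if i \<in> A then 1 else (0::real))"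
      define z where "z = vec n (\<lambda>i. if i \<in> Z then 1 else (0::real))"
      have a: "a \<in> carrier_vec n" and z: "z \<in> carrier_vec n" unfolding a_def z_def by auto
      have aTz: "a \<bullet> (T *\<^sub>v z) = e - \<alpha> * \<zeta> * (real d / real n)"
      proof -
        have "a \<bullet> (T *\<^sub>v z) = (\<Sum>i\<in>A. \<Sum>j\<in>Z. T $$ (i,j))"
          unfolding a_def z_def by (rule ind_bilin[OF T assms(5) Zsub])
        also have "\<dots> = (\<Sum>i\<in>A. real (card (nbhd E i \<inter> Z)) - \<zeta> * (real d / real n))"
        proof (rule sum.cong[OF refl])
          fix i assume i: "i \<in> A"
          hence i': "i < n" using assms(5) by auto
          have "(\<Sum>j\<in>Z. T $$ (i,j)) = (\<Sum>j\<in>Z. (if E i j then 1 else 0) - real d / real n)"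
            by (rule sum.cong[OF refl], insert Zsub i', auto simp: Tij)
          also have "\<dots> = (\<Sum>j\<in>Z. if E i j then 1 else 0) - \<zeta> * (real d / real n)"
            unfolding \<zeta>_def by (simp add: sum_subtractf)
          also have "(\<Sum>j\<in>Z. if E i j then 1 else (0::real)) = real (card {j\<in>Z. E i j})"
            by (rule sum_ind_card[OF finZ])
          also have "{j\<in>Z. E i j} = nbhd E i \<inter> Z" by (auto simp: nbhd_def)
          finally show "(\<Sum>j\<in>Z. T $$ (i,j)) = real (card (nbhd E i \<inter> Z)) - \<zeta> * (real d / real n)" .
        qed
        also have "\<dots> = e - \<alpha> * \<zeta> * (real d / real n)"
          unfolding e_def \<alpha>_def by (simp add: sum_subtractf)
        finally show ?thesis .
      qed
      have aa: "a \<bullet> a = \<alpha>" unfolding a_def \<alpha>_def by (rule ind_sq[OF assms(5)])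
      have zz: "z \<bullet> z = \<zeta>" unfolding z_def \<zeta>_def by (rule ind_sq[OF Zsub])
      have Tz: "T *\<^sub>v z \<in> carrier_vec n" using T z by simp
      have mix: "(e - \<alpha> * \<zeta> * (real d / real n))^2 \<le> \<alpha> * (lam^2 * \<zeta>)"
      proof -
        have "(a \<bullet> (T *\<^sub>v z))^2 \<le> (a \<bullet> a) * ((T *\<^sub>v z) \<bullet> (T *\<^sub>v z))" by (rule cs_vec[OF a Tz])
        also have "\<dots> \<le> (a \<bullet> a) * (lam^2 * (z \<bullet> z))"
          by (rule mult_left_mono[OF bound[OF z]], insert aa \<alpha>pos, simp)
        finally show ?thesis unfolding aTz aa zz .
      qed
      have ypre: "y = real (card (nbhd_set E' A \<inter> B))" unfolding y_def Y_def ..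
      define D where "D = real d / real n"
      have Dpos: "D > 0" unfolding D_def using dpos n0 by simp
      define R where "R = \<delta> / D"
      have R10: "\<delta> * real n / (10 * real d) = R / 10" unfolding R_def D_def using dpos n0 by simp
      have R100: "\<delta> * real n / (100 * real d) = R / 100" unfolding R_def D_def using dpos n0 by simp
      have \<alpha>R: "\<alpha> \<le> R / 100" using assms(7) unfolding R100 \<alpha>_def .
      have Rpos: "R > 0" unfolding R_def using \<delta>pos Dpos by simp
      have lam2: "lam^2 > 0" using lampos by simp
      have w: "100 * lam^2 \<le> \<delta>^2"
      proof -
        have "(10 * lam)^2 \<le> \<delta>^2" using assms(3) lampos by (intro power_mono, auto)
        thus ?thesis by (simp add: power_mult_distrib)
      qed
      define F where "F = \<delta>^2 * \<alpha> / (8 * lam^2)"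
      have F10: "10 * \<alpha> \<le> F"
      proof -
        have "80 * lam^2 \<le> \<delta>^2" using w lam2 by linarith
        hence "80 * lam^2 * \<alpha> \<le> \<delta>^2 * \<alpha>" using \<alpha>pos by (intro mult_right_mono, auto)
        hence "10 * \<alpha> * (8 * lam^2) \<le> \<delta>^2 * \<alpha>" by (simp add: algebra_simps)
        thus ?thesis unfolding F_def using lam2 by (simp add: le_divide_eq)
      qed
      have Fdef': "\<delta>^2 * real (card A) / (8 * lam^2) = F" unfolding F_def \<alpha>_def ..
      have G1: "y \<ge> min F (R / 10)"
      proof (cases "\<zeta> \<le> R / 2")
        case True
        have "\<zeta> * D \<le> R / 2 * D" using True Dpos by (intro mult_right_mono, auto)
        also have "R / 2 * D = \<delta> / 2" unfolding R_def using Dpos by simp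
        finally have "\<alpha> * (\<zeta> * D) \<le> \<alpha> * (\<delta> / 2)" using \<alpha>pos by (intro mult_left_mono, auto)
        hence h1: "e - \<alpha> * \<zeta> * D \<ge> \<delta> * \<alpha> / 2" using e_ge by (simp add: algebra_simps)
        have "(\<delta> * \<alpha> / 2)^2 \<le> (e - \<alpha> * \<zeta> * D)^2"
          using h1 \<delta>pos \<alpha>pos by (intro power_mono, auto)
        also have "\<dots> \<le> \<alpha> * (lam^2 * \<zeta>)" using mix unfolding D_def .
        finally have "\<alpha> * (\<delta>^2 * \<alpha> / 4) \<le> \<alpha> * (lam^2 * \<zeta>)"
          by (simp add: power2_eq_square algebra_simps)
        hence "\<delta>^2 * \<alpha> / 4 \<le> lam^2 * \<zeta>" using \<alpha>pos by simp
        hence "2 * F \<le> \<zeta>" unfolding F_def using lam2 by (simp add: field_simps)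
        hence "F \<le> y" using \<zeta>y F10 \<alpha>pos by linarith
        thus ?thesis by simp
      next
        case False
        thus ?thesis using \<zeta>y \<alpha>R Rpos by simp
      qed
      have G2: "min F (R / 10) \<ge> 10 * \<alpha>" using F10 \<alpha>R by simp
      have "min F (R/10) \<le> real (card (nbhd_set E' A \<inter> B))" using G1 ypre by simp
      moreover have "10 * real (card A) \<le> min F (R/10)" using G2 unfolding \<alpha>_def .
      ultimately show ?thesis unfolding Fdef' R10 by blast
    qed
  qed
qed

end
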